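(* Let $A$ be an open interval with $0\notin A$, let $n\ge 1$ be an integer, and let $f:A\to(0,\infty)$ be $n$ times differentiable on $A$. Then for every $x\in A$, $$f^{*(n)}(x)=\left(\prod_{j=1}^{n}\bigl(f^{\pi(j)}(x)\bigr)^{(-1)^{n-j}s(n,j)}\right)^{\frac{1}{x^{n}}},$$ where $s(n,j)$ denotes the unsigned Stirling numbers of the first kind.
   Context: For a positive differentiable function $g$, the geometric multiplicative derivative is $g^{*}(x)=\lim_{h\to0}\bigl(g(x+h)/g(x)\bigr)^{1/h}=\exp\{g'(x)/g(x)\}$, and the Bigeometric derivative is $g^{\pi}(x)=\lim_{h\to0}\bigl(g((1+h)x)/g(x)\bigr)^{1/h}=\exp\{x\,g'(x)/g(x)\}$. Higher-order derivatives are defined by iteration: $f^{*(0)}=f$, $f^{*(k+1)}=(f^{*(k)})^{*}$, and $f^{\pi(0)}=f$, $f^{\pi(k+1)}=(f^{\pi(k)})^{\pi}$. The unsigned Stirling numbers of the first kind $s(n,j)$ satisfy $s(0,0)=1$, $s(n,0)=0$ for $n\ge1$, and $s(n+1,j)=n\,s(n,j)+s(n,j-1)$. *)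

theory Defs
  imports "HOL-Analysis.Analysis" "HOL-Combinatorics.Stirling"
begin

definition gstar :: "(real \<Rightarrow> real) \<Rightarrow> real \<Rightarrow> real" where
  "gstar g = (\<lambda>x. exp (deriv g x / g x))"

definition gpi :: "(real \<Rightarrow> real) \<Rightarrow> real \<Rightarrow> real" where
  "gpi g = (\<lambda>x. exp (x * deriv g x / g x))"

definition gstar_n :: "nat \<Rightarrow> (real \<Rightarrow> real) \<Rightarrow> real \<Rightarrow> real" where
  "gstar_n k f = (gstar ^^ k) f"

definition gpi_n :: "nat \<Rightarrow> (real \<Rightarrow> real) \<Rightarrow> real \<Rightarrow> real" where
  "gpi_n k f = (gpi ^^ k) f"

end

theory Submission
  imports Defs
begin

fun sm :: "real set \<Rightarrow> nat \<Rightarrow> (real \<Rightarrow> real) \<Rightarrow> bool" where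
  "sm A 0 g = True"
| "sm A (Suc k) g = ((\<forall>x\<in>A. g differentiable (at x)) \<and> sm A k (deriv g))"

lemma sm_iff: "sm A n f \<longleftrightarrow> (\<forall>k<n. \<forall>x\<in>A. (deriv ^^ k) f differentiable (at x))"
proof (induction n arbitrary: f)
  case 0 then show ?case by simp
next
  case (Suc n)
  have e: "\<And>k. (deriv ^^ Suc k) f = (deriv ^^ k) (deriv f)" by (simp only: funpow_Suc_right comp_def)
  show ?case
    apply (simp add: Suc.IH)
    apply (auto simp: e[symmetric])
    apply (case_tac k, auto)
    done
qed

lemma sm_mono: "sm A (Suc k) g \<Longrightarrow> sm A k g"
  by (induction k arbitrary: g) auto

lemma sm_le: "m \<le> k \<Longrightarrow> sm A k g \<Longrightarrow> sm A m g"
  by (induction k) (auto simp: le_Suc_eq dest: sm_mono simp del: sm.simps(2))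

lemma deriv_open_cong:
  assumes "open A" "x \<in> A" "\<And>y. y \<in> A \<Longrightarrow> g y = h y"
  shows "deriv g x = deriv h x"
  by (rule deriv_cong_ev) (use assms eventually_nhds_in_open[OF assms(1,2)] in \<open>auto elim: eventually_mono\<close>)

lemma diff_open_cong:
  fixes g h :: "real \<Rightarrow> real"
  assumes "open A" "x \<in> A" "\<And>y. y \<in> A \<Longrightarrow> g y = h y" "g differentiable (at x)"
  shows "h differentiable (at x)"
proof -
  have "(g has_real_derivative deriv g x) (at x)"
    using assms(4) DERIV_deriv_iff_real_differentiable by blast
  then have "(h has_real_derivative deriv g x) (at x)"
    by (rule has_field_derivative_transform_within_open) (use assms in auto)
  then show ?thesis using real_differentiable_def by blast
qed

lemma sm_cong: "open A \<Longrightarrow> (\<And>y. y \<in> A \<Longrightarrow> g y = h y) \<Longrightarrow> sm A k g \<Longrightarrow> sm A k h"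
proof (induction k arbitrary: g h)
  case 0 then show ?case by simp
next
  case (Suc k)
  have "h differentiable (at x)" if "x \<in> A" for x
    using diff_open_cong[OF Suc.prems(1) that Suc.prems(2)] Suc.prems(3) that by auto
  then have "\<forall>x\<in>A. h differentiable (at x)" by auto
  moreover have "sm A k (deriv h)"
  proof (rule Suc.IH[OF Suc.prems(1)])
    show "sm A k (deriv g)" using Suc.prems(3) by simp
    fix y assume "y \<in> A"
    then show "deriv g y = deriv h y"
      using deriv_open_cong[OF Suc.prems(1) \<open>y \<in> A\<close>] Suc.prems(2) by blast
  qed
  ultimately show ?case by simp
qed

lemma hd: "f differentiable (at x) \<Longrightarrow> (f has_real_derivative deriv f x) (at x)"
  using DERIV_deriv_iff_real_differentiable by blast

lemma sm_const: "sm A k (\<lambda>_. c)"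
proof (induction k arbitrary: c)
  case 0 then show ?case by simp
next
  case (Suc k)
  have "deriv (\<lambda>_. c) = (\<lambda>_. 0::real)" by (rule ext, rule DERIV_imp_deriv, auto)
  then show ?case using Suc by simp
qed

lemma sm_id: "sm A k (\<lambda>x. x)"
proof (cases k)
  case 0 then show ?thesis by simp
next
  case (Suc k)
  have "deriv (\<lambda>x. x) = (\<lambda>_. 1::real)" by (rule ext, rule DERIV_imp_deriv, auto)
  then show ?thesis using Suc by (simp add: sm_const)
qed

lemma sm_add: "open A \<Longrightarrow> sm A k g \<Longrightarrow> sm A k h \<Longrightarrow> sm A k (\<lambda>y. g y + h y)"
proof (induction k arbitrary: g h)
  case 0 then show ?case by simp
next
  case (Suc k)
  have d: "deriv (\<lambda>y. g y + h y) x = deriv g x + deriv h x" if "x \<in> A" for x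
    using Suc.prems that by (intro DERIV_imp_deriv) (auto intro!: derivative_eq_intros hd)
  have "sm A k (\<lambda>y. deriv g y + deriv h y)" using Suc by auto
  then have "sm A k (deriv (\<lambda>y. g y + h y))"
    by (rule sm_cong[OF Suc.prems(1), rotated]) (use d in auto)
  then show ?case using Suc.prems by auto
qed

lemma sm_mult: "open A \<Longrightarrow> sm A k g \<Longrightarrow> sm A k h \<Longrightarrow> sm A k (\<lambda>y. g y * h y)"
proof (induction k arbitrary: g h)
  case 0 then show ?case by simp
next
  case (Suc k)
  have d: "deriv (\<lambda>y. g y * h y) x = deriv g x * h x + g x * deriv h x" if "x \<in> A" for x
    using Suc.prems that by (intro DERIV_imp_deriv) (auto intro!: derivative_eq_intros hd)
  have "sm A k (\<lambda>y. deriv g y * h y + g y * deriv h y)"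
    using Suc.IH Suc.prems sm_mono[OF Suc.prems(2)] sm_mono[OF Suc.prems(3)] by (intro sm_add) auto
  then have "sm A k (deriv (\<lambda>y. g y * h y))"
    by (rule sm_cong[OF Suc.prems(1), rotated]) (use d in auto)
  then show ?case using Suc.prems by auto
qed

lemma sm_inv: "open A \<Longrightarrow> (\<And>y. y \<in> A \<Longrightarrow> g y \<noteq> 0) \<Longrightarrow> sm A k g \<Longrightarrow> sm A k (\<lambda>y. inverse (g y))"
proof (induction k arbitrary: g)
  case 0 then show ?case by simp
next
  case (Suc k)
  have D: "((\<lambda>y. inverse (g y)) has_real_derivative ((-1) * deriv g x) * inverse (g x) * inverse (g x)) (at x)" if "x \<in> A" for x
    using Suc.prems that by (auto intro!: derivative_eq_intros hd simp: power2_eq_square)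
  note d = DERIV_imp_deriv[OF D]
  have "sm A k (\<lambda>y. ((-1) * deriv g y) * inverse (g y) * inverse (g y))"
    using Suc.IH Suc.prems sm_mono[OF Suc.prems(3)] by (intro sm_mult sm_const) auto
  then have "sm A k (deriv (\<lambda>y. inverse (g y)))"
    by (rule sm_cong[OF Suc.prems(1), rotated]) (use d in auto)
  then show ?case using D by (auto simp: real_differentiable_def)
qed

lemma sm_exp: "open A \<Longrightarrow> sm A k g \<Longrightarrow> sm A k (\<lambda>y. exp (g y))"
proof (induction k arbitrary: g)
  case 0 then show ?case by simp
next
  case (Suc k)
  have D: "((\<lambda>y. exp (g y)) has_real_derivative exp (g x) * deriv g x) (at x)" if "x \<in> A" for x
    using Suc.prems that by (auto intro!: derivative_eq_intros hd)
  note d = DERIV_imp_deriv[OF D]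
  have "sm A k (\<lambda>y. exp (g y) * deriv g y)"
    using Suc.IH Suc.prems sm_mono[OF Suc.prems(2)] by (intro sm_mult) auto
  then have "sm A k (deriv (\<lambda>y. exp (g y)))"
    by (rule sm_cong[OF Suc.prems(1), rotated]) (use d in auto)
  then show ?case using D by (auto simp: real_differentiable_def)
qed

lemma sm_ln:
  assumes a0: "open A" "\<And>y. y \<in> A \<Longrightarrow> g y > 0" "sm A kk g"
  shows "sm A kk (\<lambda>y. ln (g y))"
proof (cases kk)
  case 0 then show ?thesis by simp
next
  case (Suc k)
  have a: "open A" "\<And>y. y \<in> A \<Longrightarrow> g y > 0" "sm A (Suc k) g" using a0 Suc by auto
  have D: "((\<lambda>y. ln (g y)) has_real_derivative deriv g x * inverse (g x)) (at x)" if "x \<in> A" for x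
    using a that by (auto intro!: derivative_eq_intros hd simp: field_simps)
  note d = DERIV_imp_deriv[OF D]
  have "sm A k (\<lambda>y. deriv g y * inverse (g y))"
    using a sm_mono[OF a(3)] by (intro sm_mult sm_inv) force+
  then have "sm A k (deriv (\<lambda>y. ln (g y)))"
    by (rule sm_cong[OF a(1), rotated]) (use d in auto)
  then show ?thesis using D Suc by (auto simp: real_differentiable_def)
qed

definition th :: "(real \<Rightarrow> real) \<Rightarrow> real \<Rightarrow> real" where
  "th h = (\<lambda>y. y * deriv h y)"

lemma sm_th: "open A \<Longrightarrow> sm A (Suc k) h \<Longrightarrow> sm A k (th h)"
  unfolding th_def by (intro sm_mult sm_id) auto

lemma stir_alg:
  fixes T :: "nat \<Rightarrow> real"
  shows "(\<Sum>j\<le>Suc m. (-1)^j * real (stirling (Suc m) j) * T j) =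
    real m * (\<Sum>j\<le>m. (-1)^j * real (stirling m j) * T j) - (\<Sum>j\<le>m. (-1)^j * real (stirling m j) * T (Suc j))"
proof -
  define F where "F j = (-1)^j * real (stirling m j) * T j" for j
  have m0: "real m * F 0 = 0" by (cases m) (auto simp: F_def)
  have "(\<Sum>j\<le>Suc m. F j) = (\<Sum>j\<le>m. F j)" by (simp add: F_def)
  moreover have "(\<Sum>j\<le>Suc m. F j) = F 0 + (\<Sum>j\<le>m. F (Suc j))" by (rule sum.atMost_Suc_shift)
  ultimately have e1: "(\<Sum>j\<le>m. F (Suc j)) = (\<Sum>j\<le>m. F j) - F 0" by simp
  have "(\<Sum>j\<le>Suc m. (-1)^j * real (stirling (Suc m) j) * T j) =
      (\<Sum>j\<le>m. (-1)^(Suc j) * real (stirling (Suc m) (Suc j)) * T (Suc j))"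
    by (subst sum.atMost_Suc_shift) simp
  also have "\<dots> = (\<Sum>j\<le>m. real m * F (Suc j) - (-1)^j * real (stirling m j) * T (Suc j))"
    by (rule sum.cong) (auto simp: F_def algebra_simps)
  also have "\<dots> = real m * (\<Sum>j\<le>m. F (Suc j)) - (\<Sum>j\<le>m. (-1)^j * real (stirling m j) * T (Suc j))"
    by (simp add: sum_subtractf sum_distrib_left)
  also have "\<dots> = real m * (\<Sum>j\<le>m. F j) - (\<Sum>j\<le>m. (-1)^j * real (stirling m j) * T (Suc j))"
    using m0 by (simp add: e1 algebra_simps)
  finally show ?thesis by (simp add: F_def)
qed

lemma sm_th_pow: "open A \<Longrightarrow> sm A n g \<Longrightarrow> j \<le> n \<Longrightarrow> sm A (n - j) ((th ^^ j) g)"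
proof (induction j)
  case 0 then show ?case by simp
next
  case (Suc j)
  then have "sm A (Suc (n - Suc j)) ((th ^^ j) g)" by (simp add: Suc_diff_Suc)
  then show ?case using sm_th[OF Suc.prems(1)] by simp
qed

lemma sm_diff: "sm A n g \<Longrightarrow> k < n \<Longrightarrow> x \<in> A \<Longrightarrow> (deriv ^^ k) g differentiable (at x)"
  using sm_iff by blast

lemma identity:
  assumes "open A" "sm A m g" "x \<in> A"
  shows "(\<Sum>j\<le>m. (-1)^j * real (stirling m j) * (th ^^ j) g x) = (-1)^m * x^m * (deriv ^^ m) g x"
  using assms(2,3)
proof (induction m arbitrary: x)
  case 0 then show ?case by simp
next
  case (Suc m)
  define c where "c j = (-1)^j * real (stirling m j)" for j
  define E where "E y = (\<Sum>j\<le>m. c j * (th ^^ j) g y)" for y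
  define R where "R y = (-1)^m * y^m * (deriv ^^ m) g y" for y
  have smm: "sm A m g" using Suc.prems(1) by (rule sm_mono)
  have ER: "E y = R y" if "y \<in> A" for y using Suc.IH[OF smm that] by (simp add: E_def R_def c_def)
  have dj: "(th ^^ j) g differentiable (at x)" if "j \<le> m" for j
  proof -
    have "sm A (Suc m - j) ((th ^^ j) g)" using sm_th_pow[OF assms(1) Suc.prems(1)] that by simp
    moreover have "Suc m - j = Suc (m - j)" using that by simp
    ultimately show ?thesis using Suc.prems(2) by simp
  qed
  have DE: "(E has_real_derivative (\<Sum>j\<le>m. c j * deriv ((th ^^ j) g) x)) (at x)"
    unfolding E_def using dj by (auto intro!: derivative_eq_intros hd simp: mult.commute)
  have dm: "(deriv ^^ m) g differentiable (at x)" using sm_diff[OF Suc.prems(1) _ Suc.prems(2)] by simp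
  have DR: "(R has_real_derivative (-1)^m * (real m * x^(m-1) * (deriv ^^ m) g x + x^m * (deriv ^^ Suc m) g x)) (at x)"
    unfolding R_def using hd[OF dm] by (auto intro!: derivative_eq_intros simp: algebra_simps)
  have DE': "(R has_real_derivative (\<Sum>j\<le>m. c j * deriv ((th ^^ j) g) x)) (at x)"
    by (rule has_field_derivative_transform_within_open[OF DE assms(1) Suc.prems(2)]) (simp add: ER)
  have eq: "(\<Sum>j\<le>m. c j * deriv ((th ^^ j) g) x) = (-1)^m * (real m * x^(m-1) * (deriv ^^ m) g x + x^m * (deriv ^^ Suc m) g x)"
    using DERIV_unique[OF DE' DR] .
  have xm: "x * (real m * x^(m-1)) = real m * x^m" by (cases m) auto
  have "(\<Sum>j\<le>m. c j * (th ^^ Suc j) g x) = x * (\<Sum>j\<le>m. c j * deriv ((th ^^ j) g) x)"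
    by (simp add: sum_distrib_left th_def algebra_simps)
  also have "\<dots> = (-1)^m * (real m * x^m * (deriv ^^ m) g x + x^Suc m * (deriv ^^ Suc m) g x)"
    unfolding eq using xm by (simp add: algebra_simps) blast
  finally have s1: "(\<Sum>j\<le>m. c j * (th ^^ Suc j) g x) = real m * E x + (-1)^m * x^Suc m * (deriv ^^ Suc m) g x"
    using ER[OF Suc.prems(2)] by (simp add: R_def algebra_simps)
  show ?case
    using stir_alg[of m "\<lambda>j. (th ^^ j) g x"] s1 unfolding E_def c_def by (simp add: algebra_simps)
qed

lemma star_claim:
  assumes A: "open A" and fp: "\<And>y. y \<in> A \<Longrightarrow> f y > 0" and sf: "sm A n f"
  shows "1 \<le> k \<Longrightarrow> k \<le> n \<Longrightarrow> x \<in> A \<Longrightarrow> gstar_n k f x = exp ((deriv ^^ k) (\<lambda>y. ln (f y)) x)"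
proof (induction k arbitrary: x)
  case 0 then show ?case by simp
next
  case (Suc k)
  define g where "g = (\<lambda>y. ln (f y))"
  have sg: "sm A n g" unfolding g_def by (rule sm_ln[OF A fp sf])
  show ?case
  proof (cases "k = 0")
    case True
    have df: "f differentiable (at x)" using sm_diff[OF sf, of 0 x] Suc.prems by simp
    have "deriv g x = deriv f x * inverse (f x)" unfolding g_def
      using hd[OF df] fp[OF Suc.prems(3)] by (intro DERIV_imp_deriv) (auto intro!: derivative_eq_intros simp: divide_inverse)
    then show ?thesis using True by (simp add: gstar_n_def gstar_def g_def[symmetric] field_simps)
  next
    case False
    define L where "L = (deriv ^^ k) g"
    have IH: "gstar_n k f y = exp (L y)" if "y \<in> A" for y
      using Suc.IH[OF _ _ that] False Suc.prems by (simp add: L_def g_def)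
    have dL: "L differentiable (at x)" unfolding L_def using sm_diff[OF sg, of k x] Suc.prems by simp
    have D: "((\<lambda>y. exp (L y)) has_real_derivative exp (L x) * deriv L x) (at x)"
      using hd[OF dL] by (auto intro!: derivative_eq_intros)
    have D2: "(gstar_n k f has_real_derivative exp (L x) * deriv L x) (at x)"
      by (rule has_field_derivative_transform_within_open[OF D A Suc.prems(3)]) (simp add: IH)
    have "gstar_n (Suc k) f x = gstar (gstar_n k f) x" by (simp add: gstar_n_def)
    also have "\<dots> = exp (deriv L x)"
      unfolding gstar_def DERIV_imp_deriv[OF D2] IH[OF Suc.prems(3)] by simp
    finally show ?thesis by (simp add: L_def g_def)
  qed
qed

lemma pi_claim:
  assumes A: "open A" and fp: "\<And>y. y \<in> A \<Longrightarrow> f y > 0" and sf: "sm A n f"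
  shows "1 \<le> k \<Longrightarrow> k \<le> n \<Longrightarrow> x \<in> A \<Longrightarrow> gpi_n k f x = exp ((th ^^ k) (\<lambda>y. ln (f y)) x)"
proof (induction k arbitrary: x)
  case 0 then show ?case by simp
next
  case (Suc k)
  define g where "g = (\<lambda>y. ln (f y))"
  have sg: "sm A n g" unfolding g_def by (rule sm_ln[OF A fp sf])
  show ?case
  proof (cases "k = 0")
    case True
    have df: "f differentiable (at x)" using sm_diff[OF sf, of 0 x] Suc.prems by simp
    have "deriv g x = deriv f x * inverse (f x)" unfolding g_def
      using hd[OF df] fp[OF Suc.prems(3)] by (intro DERIV_imp_deriv) (auto intro!: derivative_eq_intros simp: divide_inverse)
    then show ?thesis using True by (simp add: gpi_n_def gpi_def th_def g_def[symmetric] field_simps)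
  next
    case False
    define L where "L = (th ^^ k) g"
    have IH: "gpi_n k f y = exp (L y)" if "y \<in> A" for y
      using Suc.IH[OF _ _ that] False Suc.prems by (simp add: L_def g_def)
    have "sm A (n - k) L" unfolding L_def using sm_th_pow[OF A sg] Suc.prems by simp
    moreover have "n - k = Suc (n - Suc k)" using Suc.prems by simp
    ultimately have dL: "L differentiable (at x)" using Suc.prems by simp
    have D: "((\<lambda>y. exp (L y)) has_real_derivative exp (L x) * deriv L x) (at x)"
      using hd[OF dL] by (auto intro!: derivative_eq_intros)
    have D2: "(gpi_n k f has_real_derivative exp (L x) * deriv L x) (at x)"
      by (rule has_field_derivative_transform_within_open[OF D A Suc.prems(3)]) (simp add: IH)
    have "gpi_n (Suc k) f x = gpi (gpi_n k f) x" by (simp add: gpi_n_def)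
    also have "\<dots> = exp (x * deriv L x)"
      unfolding gpi_def DERIV_imp_deriv[OF D2] IH[OF Suc.prems(3)] by simp
    also have "\<dots> = exp ((th ^^ Suc k) g x)" by (simp add: L_def th_def[of "(th ^^ k) g"])
    finally show ?thesis by (simp add: g_def)
  qed
qed

theorem theorem2:
  fixes A :: "real set" and f :: "real \<Rightarrow> real" and n :: nat
  assumes "is_interval A" and "open A" and "A \<noteq> {}" and "0 \<notin> A"
    and "n \<ge> 1"
    and "\<And>x. x \<in> A \<Longrightarrow> f x > 0"
    and "\<And>k x. k < n \<Longrightarrow> x \<in> A \<Longrightarrow> (deriv ^^ k) f differentiable (at x)"
    and "x \<in> A"
  shows "gstar_n n f x =
    (\<Prod>j=1..n. (gpi_n j f x) powr ((-1) ^ (n - j) * real (stirling n j))) powr (1 / x ^ n)"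
proof -
  define g where "g = (\<lambda>y. ln (f y))"
  have sf: "sm A n f" using assms(7) sm_iff by blast
  have sg: "sm A n g" unfolding g_def by (rule sm_ln[OF assms(2) assms(6) sf])
  have x0: "x \<noteq> 0" using assms(4,8) by auto
  define T where "T j = (th ^^ j) g x" for j
  have ep: "exp a powr b = exp (b * a)" for a b :: real by (simp add: powr_def)
  have "(\<Prod>j=1..n. (gpi_n j f x) powr ((-1) ^ (n - j) * real (stirling n j)))
      = (\<Prod>j=1..n. exp ((-1) ^ (n - j) * real (stirling n j) * T j))"
    by (rule prod.cong) (use pi_claim[OF assms(2,6) sf] assms(8) in \<open>auto simp: ep T_def g_def\<close>)
  also have "\<dots> = exp (\<Sum>j=1..n. (-1) ^ (n - j) * real (stirling n j) * T j)"
    by (simp add: exp_sum)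
  finally have P: "(\<Prod>j=1..n. (gpi_n j f x) powr ((-1) ^ (n - j) * real (stirling n j)))
      = exp (\<Sum>j=1..n. (-1) ^ (n - j) * real (stirling n j) * T j)" .
  have sgn: "(-1::real) ^ (n - j) = (-1)^n * (-1)^j" if "j \<le> n" for j
  proof -
    have "(-1::real)^n = (-1)^(n-j) * (-1)^j" using that by (simp add: power_add[symmetric])
    then have "(-1::real)^n * (-1)^j = (-1)^(n-j) * ((-1)^j * (-1)^j)" by simp
    also have "\<dots> = (-1)^(n-j)" by (simp add: power_add[symmetric] flip: power_mult_distrib)
    finally show ?thesis by simp
  qed
  have "(\<Sum>j=1..n. (-1) ^ (n - j) * real (stirling n j) * T j)
      = (\<Sum>j\<le>n. (-1) ^ (n - j) * real (stirling n j) * T j)"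
  proof -
    have "{..n} = insert 0 {1..n}" by auto
    then show ?thesis using assms(5) by simp
  qed
  also have "\<dots> = (-1)^n * (\<Sum>j\<le>n. (-1) ^ j * real (stirling n j) * T j)"
    by (simp add: sum_distrib_left sgn mult.assoc)
  also have "\<dots> = x^n * (deriv ^^ n) g x"
    using identity[OF assms(2) sg assms(8)] by (simp add: T_def flip: mult.assoc power_mult_distrib)
  finally have S: "(\<Sum>j=1..n. (-1) ^ (n - j) * real (stirling n j) * T j) = x^n * (deriv ^^ n) g x" .
  have "gstar_n n f x = exp ((deriv ^^ n) g x)"
    using star_claim[OF assms(2,6) sf] assms(5,8) by (simp add: g_def)
  also have "\<dots> = (exp (x^n * (deriv ^^ n) g x)) powr (1 / x ^ n)"
    using x0 by (simp add: ep)
  finally show ?thesis using P S by simp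
qed

end
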